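(* If $X$ is a homogeneous ordered compactum, then $\chi_K Nt(X)=\omega$.
   Context: An ordered compactum is a compact space whose topology is the order topology of a linear order. Families of open sets are ordered by inclusion; a family is $\kappa^{\mathrm{op}}$-like if no member is contained in $\kappa$-many members. For $E\subseteq X$, $\chi Nt(E,X)$ is the least $\kappa\geq\omega$ such that $E$ has a $\kappa^{\mathrm{op}}$-like neighborhood base (family of open sets containing $E$ such that every open set containing $E$ contains a member); $\chi_K Nt(X)$ is the supremum of $\chi Nt(K,X)$ over compact $K\subseteq X$. *)

theory Defs
  imports "HOL-Analysis.Analysis"
begin

text \<open>An ordered compactum is modelled as a type of class linorder_topology
  (topology = order topology of a linear order) whose universe is compact.\<close>

definition homogeneous_space :: "'a::topological_space itself \<Rightarrow> bool" where
  "homogeneous_space t \<longleftrightarrow>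
     (\<forall>x y. \<exists>h k. homeomorphism (UNIV::'a set) (UNIV::'a set) h k \<and> h x = y)"

definition nbhd_base :: "'a::topological_space set \<Rightarrow> 'a set set \<Rightarrow> bool" where
  "nbhd_base E F \<longleftrightarrow> (\<forall>U\<in>F. open U \<and> E \<subseteq> U) \<and>
     (\<forall>W. open W \<and> E \<subseteq> W \<longrightarrow> (\<exists>U\<in>F. U \<subseteq> W))"

text \<open>A family F is kappa-op-like (kappa given as a cardinal, i.e. a well-order
  relation): no member is contained in kappa-many members.\<close>
definition op_like :: "'b rel \<Rightarrow> 'a set set \<Rightarrow> bool" where
  "op_like \<kappa> F \<longleftrightarrow> (\<forall>U\<in>F. (\<kappa>, card_of {V\<in>F. U \<subseteq> V}) \<notin> ordLeq)"

text \<open>chiNt(E,X) = omega iff E has an omega-op-like neighborhood base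
  (omega is the least admissible value); hence chi_K Nt(X) = omega iff every
  compact K has an omega-op-like neighborhood base.\<close>
definition chiNt_omega :: "'a::topological_space set \<Rightarrow> bool" where
  "chiNt_omega E \<longleftrightarrow> (\<exists>F. nbhd_base E F \<and> op_like natLeq F)"

definition chiK_Nt_omega :: "'a::topological_space itself \<Rightarrow> bool" where
  "chiK_Nt_omega t \<longleftrightarrow> (\<forall>K::'a set. compact K \<longrightarrow> chiNt_omega K)"

end

theory Submission
  imports Defs
begin


lemma homeo_open_vimage:
  assumes "homeomorphism (UNIV::'a::topological_space set) (UNIV::'a set) h k" "open S"
  shows "open (h -` S)"
proof -
  have "continuous_on UNIV h" using assms(1) unfolding homeomorphism_def by blast
  then show ?thesis using assms(2) continuous_on_open_vimage[of UNIV h] by auto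
qed

lemma homeo_image_eq:
  assumes "homeomorphism (UNIV::'a::topological_space set) (UNIV::'a set) h k"
  shows "h ` S = k -` S"
proof -
  have a: "\<And>x. k (h x) = x" "\<And>y. h (k y) = y" using assms unfolding homeomorphism_def by auto
  show ?thesis
  proof
    show "h ` S \<subseteq> k -` S" using a by auto
    show "k -` S \<subseteq> h ` S" using a by (metis image_eqI subsetI vimageE)
  qed
qed

lemma fc:
  assumes cpt: "compact (UNIV :: 'a::linorder_topology set)"
    and hom: "homogeneous_space TYPE('a)"
  shows "\<exists>B::'a\<Rightarrow>nat\<Rightarrow>'a set. (\<forall>p n. open (B p n) \<and> p \<in> B p n \<and> B p (Suc n) \<subseteq> B p n)
     \<and> (\<forall>p W. open W \<and> p \<in> W \<longrightarrow> (\<exists>n. B p n \<subseteq> W))"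
proof (cases "finite (UNIV::'a set)")
  case True
  have "open {p}" for p :: 'a
  proof -
    have "closed (UNIV - {p})" using True by (intro finite_imp_closed) auto
    then show ?thesis by (simp add: closed_open Compl_eq_Diff_UNIV[symmetric])
  qed
  then show ?thesis by (intro exI[of _ "\<lambda>p n. {p}"]) auto
next
  case inf: False
  obtain m :: 'a where m: "\<And>t. m \<le> t"
    using compact_attains_inf[OF cpt] by auto
  obtain x :: 'a where "x islimpt UNIV"
    using Heine_Borel_imp_Bolzano_Weierstrass[OF cpt inf] by auto
  then have nox: "\<not> open {x}" by (simp add: islimpt_UNIV_iff)
  obtain h k where hk: "homeomorphism UNIV UNIV h k" "h x = m"
    using hom unfolding homogeneous_space_def by blast
  have hinv: "\<And>z. k (h z) = z" "\<And>z. h (k z) = z" using hk(1) unfolding homeomorphism_def by auto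
  have "\<not> open {m}"
  proof
    assume "open {m}"
    then have "open (h -` {m})" by (rule homeo_open_vimage[OF hk(1)])
    moreover have "h -` {m} = {x}" using hk(2) hinv by (metis singleton_iff subsetI subset_antisym vimage_singleton_eq)
    ultimately show False using nox by simp
  qed
  then have mlim: "m islimpt UNIV" by (simp add: islimpt_UNIV_iff)
  obtain z0 where z0: "z0 \<noteq> m" using inf by (metis UNIV_I finite.simps infinite_imp_nonempty insertI1 subsetI subset_antisym)
  then have z0m: "m < z0" using m[of z0] by auto
  define c where "c = rec_nat z0 (\<lambda>_ w. SOME z. m < z \<and> z < w)"
  have step: "m < w \<Longrightarrow> \<exists>z. m < z \<and> z < w" for w
  proof -
    assume "m < w"
    then obtain z where "z \<in> {..<w}" "z \<noteq> m" using mlim by (meson UNIV_I islimptE lessThan_iff open_lessThan)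
    moreover have "m < z" using m[of z] \<open>z \<noteq> m\<close> by (simp add: less_le)
    ultimately show ?thesis by auto
  qed
  have cS: "c (Suc n) = (SOME z. m < z \<and> z < c n)" for n by (simp add: c_def)
  have cpos: "m < c n" for n
  proof (induction n)
    case 0 then show ?case using z0m by (simp add: c_def)
  next
    case (Suc n) then show ?case using someI_ex[OF step[OF Suc.IH]] cS[of n] by simp
  qed
  have cm: "m < c n \<and> c (Suc n) < c n" for n
    using cpos[of n] someI_ex[OF step[OF cpos[of n]]] cS[of n] by simp
  have cdec: "i < j \<Longrightarrow> c j < c i" for i j
  proof (induction j)
    case 0 then show ?case by simp
  next
    case (Suc j) then show ?case using cm[of j] by (metis less_Suc_eq order.strict_trans)
  qed
  have cdecle: "i \<le> j \<Longrightarrow> c j \<le> c i" for i j using cdec[of i j] by (cases "i = j") auto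
  have "inj c" by (metis cdec linorder_inj_onI' order_less_irrefl inj_on_def nat_neq_iff)
  then have "infinite (range c)" by (simp add: range_inj_infinite)
  then obtain y where ylim: "y islimpt range c"
    using Heine_Borel_imp_Bolzano_Weierstrass[OF cpt] by blast
  have yc: "y < c n" for n
  proof (rule ccontr)
    assume "\<not> y < c n"
    then have ycn: "c (Suc n) < y" using cm[of n] by auto
    define T where "T = {c (Suc n)<..} - (c ` {..n} - {y})"
    have "open T" unfolding T_def by (intro open_Diff finite_imp_closed) auto
    moreover have "y \<in> T" using ycn by (auto simp: T_def)
    ultimately obtain z where z: "z \<in> range c" "z \<in> T" "z \<noteq> y" using ylim by (meson islimptE)
    then obtain j where j: "z = c j" by auto
    have "j \<le> n"
    proof (rule ccontr)
      assume "\<not> j \<le> n"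
      then have "c j \<le> c (Suc n)" using cdecle by simp
      then show False using z(2) j by (auto simp: T_def)
    qed
    then show False using z j by (auto simp: T_def)
  qed
  have clim: "c \<longlonglongrightarrow> y"
  proof (rule topological_tendstoI)
    fix S assume S: "open S" "y \<in> S"
    obtain b where b: "b > y" "{y..<b} \<subseteq> S" using open_right[OF S yc[of 0]] by auto
    obtain z where z: "z \<in> range c" "z \<in> {..<b}" "z \<noteq> y" using ylim b(1)
      by (meson islimptE lessThan_iff open_lessThan)
    then obtain j where j: "z = c j" by auto
    show "\<forall>\<^sub>F n in sequentially. c n \<in> S"
    proof (rule eventually_sequentiallyI[of j])
      fix n assume "j \<le> n"
      then have "c n \<le> c j" by (rule cdecle)
      then have "c n \<in> {y..<b}" using z j yc[of n] by auto
      then show "c n \<in> S" using b(2) by blast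
    qed
  qed
  obtain h' k' where hk': "homeomorphism UNIV UNIV h' k'" "h' y = m"
    using hom unfolding homogeneous_space_def by blast
  have hinv': "\<And>z. k' (h' z) = z" using hk'(1) unfolding homeomorphism_def by auto
  define d where "d n = h' (c n)" for n
  have hcont: "continuous_on UNIV h'" using hk'(1) unfolding homeomorphism_def by blast
  have dlim: "d \<longlonglongrightarrow> m"
    unfolding d_def hk'(2)[symmetric]
    by (rule continuous_on_tendsto_compose[OF hcont clim]) auto
  have dm: "m < d n" for n
  proof -
    have "d n \<noteq> m" using yc[of n] hinv' hk'(2) unfolding d_def by (metis order_less_irrefl)
    then show ?thesis using m[of "d n"] by (simp add: less_le)
  qed
  define e where "e n = Min (d ` {..n})" for n
  have em: "m < e n" for n unfolding e_def using dm by (subst Min_gr_iff) auto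
  have ed: "e n \<le> d n" for n unfolding e_def by (intro Min_le) auto
  have edec: "e (Suc n) \<le> e n" for n unfolding e_def
    by (intro Min_antimono) (auto simp: atMost_Suc)
  have "\<forall>p. \<exists>g. (\<exists>k::'a\<Rightarrow>'a. homeomorphism UNIV UNIV g k) \<and> g m = p"
    using hom unfolding homogeneous_space_def by metis
  then obtain G where G: "\<And>p. \<exists>k::'a\<Rightarrow>'a. homeomorphism UNIV UNIV (G p) k" "\<And>p. G p m = p"
    by metis
  define B where "B p n = G p ` {..< e n}" for p n
  show ?thesis
  proof (intro exI[of _ B] conjI allI impI)
    fix p n
    obtain k where gk: "homeomorphism UNIV UNIV (G p) k" using G(1) by blast
    show "open (B p n)" unfolding B_def homeo_image_eq[OF gk]
      by (rule homeo_open_vimage[OF homeomorphism_sym[THEN iffD1, OF gk]]) simp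
    show "p \<in> B p n" unfolding B_def using G(2)[of p] em[of n] by force
    show "B p (Suc n) \<subseteq> B p n" unfolding B_def using edec[of n] by (intro image_mono) auto
  next
    fix p and W :: "'a set"
    assume W: "open W \<and> p \<in> W"
    obtain k where gk: "homeomorphism UNIV UNIV (G p) k" using G(1) by blast
    have V: "open (G p -` W)" "m \<in> G p -` W" using W G(2)[of p] homeo_open_vimage[OF gk] by auto
    obtain b where b: "b > m" "{m..<b} \<subseteq> G p -` W" using open_right[OF V dm[of 0]] by auto
    have "\<forall>\<^sub>F n in sequentially. d n \<in> {..<b}"
      using dlim b(1) by (intro topological_tendstoD) auto
    then obtain n where "d n < b" by (meson eventually_sequentially lessThan_iff order_refl)
    then have "{..<e n} \<subseteq> G p -` W" using ed[of n] b(2) m by fastforce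
    then show "\<exists>n. B p n \<subseteq> W" unfolding B_def by auto
  qed
qed



definition gap :: "'a::linorder set \<Rightarrow> 'a \<Rightarrow> 'a set" where
  "gap K q = {z. {min q z..max q z} \<inter> K = {}}"

lemma mm: "(t::'a::linorder) \<in> {min a b..max a b} \<longleftrightarrow> (a\<le>t\<and>t\<le>b) \<or> (b\<le>t\<and>t\<le>a)"
  by (auto simp: min_def max_def)

lemma gap_mem: "z \<in> gap K q \<longleftrightarrow> (\<forall>t. ((q\<le>t\<and>t\<le>z) \<or> (z\<le>t\<and>t\<le>q)) \<longrightarrow> t \<notin> K)"
  unfolding gap_def using mm by blast

lemma gap_self: "q \<notin> K \<Longrightarrow> q \<in> gap K q"
  by (auto simp: gap_def)

lemma gap_notin: "z \<in> gap K q \<Longrightarrow> z \<notin> K"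
  unfolding gap_mem by (meson linear order_refl)

lemma gap_trans: "z \<in> gap K q \<Longrightarrow> w \<in> gap K z \<Longrightarrow> w \<in> gap K q"
  unfolding gap_mem by (meson linear order_trans)

lemma gap_sym: "z \<in> gap K q \<Longrightarrow> q \<in> gap K z"
  by (simp add: gap_def min.commute max.commute)

lemma gap_eq: "z \<in> gap K q \<Longrightarrow> gap K z = gap K q"
  using gap_trans gap_sym by blast

lemma gap_conv: "g1 \<in> gap K q \<Longrightarrow> g2 \<in> gap K q \<Longrightarrow> g1 \<le> z \<Longrightarrow> z \<le> g2 \<Longrightarrow> z \<in> gap K q"
proof -
  assume a: "g1 \<in> gap K q" "g2 \<in> gap K q" "g1 \<le> z" "z \<le> g2"
  have "g2 \<in> gap K g1" using a gap_sym gap_trans by blast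
  then have "z \<in> gap K g1" using a(3,4) unfolding gap_mem by (meson order_trans)
  then show ?thesis using a(1) gap_trans by blast
qed

lemma gap_open_L:
  fixes K :: "'a::linorder_topology set" and z :: 'a
  assumes oK: "open (- K)" "z \<in> - K"
  shows "\<exists>L. open L \<and> z \<in> L \<and> (\<forall>t. t \<in> L \<longrightarrow> t \<le> z \<longrightarrow> {t..z} \<inter> K = {})"
proof -
  obtain L where L: "open L" "z \<in> L" "\<And>t. t \<in> L \<Longrightarrow> t \<le> z \<Longrightarrow> {t..z} \<inter> K = {}"
  proof (cases "\<exists>y. y < z")
    case True
    then obtain y where "y < z" by blast
    then obtain b where b: "b < z" "{b<..z} \<subseteq> - K" using open_left[OF oK] by blast
    show ?thesis
    proof (rule that[of "{b<..}"])
      fix t assume "t \<in> {b<..}" "t \<le> z"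
      then have "{t..z} \<subseteq> {b<..z}" by auto
      then show "{t..z} \<inter> K = {}" using b(2) by blast
    next
      show "open {b<..}" by simp
      show "z \<in> {b<..}" using b(1) by simp
    qed
  next
    case False
    show ?thesis
    proof (rule that[of UNIV])
      fix t assume zt: "t \<le> z"
      have "\<not> t < z" using False by blast
      then have "t = z" using zt by simp
      then show "{t..z} \<inter> K = {}" using oK by auto
    qed auto
  qed
  show ?thesis using L by blast
qed

lemma gap_open_R:
  fixes K :: "'a::linorder_topology set" and z :: 'a
  assumes oK: "open (- K)" "z \<in> - K"
  shows "\<exists>R. open R \<and> z \<in> R \<and> (\<forall>t. t \<in> R \<longrightarrow> z \<le> t \<longrightarrow> {z..t} \<inter> K = {})"
proof -
  obtain R where R: "open R" "z \<in> R" "\<And>t. t \<in> R \<Longrightarrow> z \<le> t \<Longrightarrow> {z..t} \<inter> K = {}"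
  proof (cases "\<exists>y. z < y")
    case True
    then obtain y where "z < y" by blast
    then obtain b where b: "b > z" "{z..<b} \<subseteq> - K" using open_right[OF oK] by blast
    show ?thesis
    proof (rule that[of "{..<b}"])
      fix t assume "t \<in> {..<b}" "z \<le> t"
      then have "{z..t} \<subseteq> {z..<b}" by auto
      then show "{z..t} \<inter> K = {}" using b(2) by blast
    next
      show "open {..<b}" by simp
      show "z \<in> {..<b}" using b(1) by simp
    qed
  next
    case False
    show ?thesis
    proof (rule that[of UNIV])
      fix t assume zt: "z \<le> t"
      have "\<not> z < t" using False by blast
      then have "t = z" using zt by simp
      then show "{z..t} \<inter> K = {}" using oK by auto
    qed auto
  qed
  show ?thesis using R by blast
qed

lemma gap_open_F:
  fixes K :: "'a::linorder_topology set" and z :: 'a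
  assumes zq: "z \<in> gap K q" and L: "open L" "z \<in> L" "\<And>t. t \<in> L \<Longrightarrow> t \<le> z \<Longrightarrow> {t..z} \<inter> K = {}"
  and R: "open R" "z \<in> R" "\<And>t. t \<in> R \<Longrightarrow> z \<le> t \<Longrightarrow> {z..t} \<inter> K = {}"
  shows "\<exists>T. open T \<and> z \<in> T \<and> T \<subseteq> gap K q"
proof -
  have "L \<inter> R \<subseteq> gap K q"
  proof
    fix w assume w: "w \<in> L \<inter> R"
    have "w \<in> gap K z"
    proof (cases "w \<le> z")
      case True then have "{w..z} \<inter> K = {}" using L(3)[of w] w by blast
      then show ?thesis unfolding gap_mem using True by (meson atLeastAtMost_iff disjoint_iff order_trans)
    next
      case False then have "{z..w} \<inter> K = {}" using R(3)[of w] w by (meson IntD2 le_cases)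
      then show ?thesis unfolding gap_mem using False by (meson atLeastAtMost_iff disjoint_iff order_trans le_cases)
    qed
    then show "w \<in> gap K q" using gap_trans[OF zq] by blast
  qed
  then show "\<exists>T. open T \<and> z \<in> T \<and> T \<subseteq> gap K q" using L R by (intro exI[of _ "L \<inter> R"]) auto
qed


lemma gap_open:
  fixes K :: "'a::linorder_topology set"
  assumes "closed K" shows "open (gap K q)"
proof (subst open_subopen, intro ballI)
  fix z assume zq: "z \<in> gap K q"
  have oK: "open (- K)" "z \<in> - K" using assms gap_notin[OF zq] by (simp_all add: open_Compl)
  obtain L where L: "open L" "z \<in> L" "\<And>t. t \<in> L \<Longrightarrow> t \<le> z \<Longrightarrow> {t..z} \<inter> K = {}"
    using gap_open_L[OF oK] by blast
  obtain R where R: "open R" "z \<in> R" "\<And>t. t \<in> R \<Longrightarrow> z \<le> t \<Longrightarrow> {z..t} \<inter> K = {}"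
    using gap_open_R[OF oK] by blast
  show "\<exists>T. open T \<and> z \<in> T \<and> T \<subseteq> gap K q" by (rule gap_open_F[OF zq L R])
qed

lemma subsingleton_finite: "(\<And>x y. x \<in> A \<Longrightarrow> y \<in> A \<Longrightarrow> x = y) \<Longrightarrow> finite A"
proof (cases "A = {}")
  case False
  assume a: "\<And>x y. x \<in> A \<Longrightarrow> y \<in> A \<Longrightarrow> x = y"
  obtain x where "x \<in> A" using False by blast
  then have "A \<subseteq> {x}" using a by blast
  then show ?thesis using finite_subset by blast
qed simp

lemma gap_bd_finite:
  fixes K :: "'a::linorder_topology set"
  shows "finite (closure (gap K q) - gap K q)"
proof -
  define G where "G = gap K q"
  define A where "A = {z \<in> closure G. \<forall>g\<in>G. z < g}"
  define C where "C = {z \<in> closure G. \<forall>g\<in>G. g < z}"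
  have sub: "closure G - G \<subseteq> A \<union> C"
  proof
    fix z assume z: "z \<in> closure G - G"
    show "z \<in> A \<union> C"
    proof (rule ccontr)
      assume "z \<notin> A \<union> C"
      then obtain g1 g2 where "g1 \<in> G" "g2 \<in> G" "\<not> z < g1" "\<not> g2 < z" using z by (auto simp: A_def C_def)
      then have "z \<in> G" unfolding G_def using gap_conv[of g1 K q g2 z] by (auto simp: not_less)
      then show False using z by blast
    qed
  qed
  have "finite A"
  proof (rule subsingleton_finite)
    have lt: "z1 \<in> A \<Longrightarrow> z2 \<in> A \<Longrightarrow> \<not> z1 < z2" for z1 z2
    proof
      assume a: "z1 \<in> A" "z2 \<in> A" "z1 < z2"
      have "{..<z2} \<inter> G = {}" using a(2) unfolding A_def by fastforce
      then have "{..<z2} \<inter> closure G = {}" using open_Int_closure_eq_empty[of "{..<z2}" G] by simp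
      then show False using a unfolding A_def by auto
    qed
    fix x y assume "x \<in> A" "y \<in> A" then show "x = y" using lt by (meson linorder_neqE)
  qed
  moreover have "finite C"
  proof (rule subsingleton_finite)
    have lt: "z1 \<in> C \<Longrightarrow> z2 \<in> C \<Longrightarrow> \<not> z1 < z2" for z1 z2
    proof
      assume a: "z1 \<in> C" "z2 \<in> C" "z1 < z2"
      have "{z1<..} \<inter> G = {}" using a(1) unfolding C_def by fastforce
      then have "{z1<..} \<inter> closure G = {}" using open_Int_closure_eq_empty[of "{z1<..}" G] by simp
      then show False using a unfolding C_def by auto
    qed
    fix x y assume "x \<in> C" "y \<in> C" then show "x = y" using lt by (meson linorder_neqE)
  qed
  ultimately show ?thesis using sub finite_subset unfolding G_def by blast
qed

lemma gap_bd_K: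
  fixes K :: "'a::linorder_topology set"
  assumes "closed K"
  shows "closure (gap K q) - gap K q \<subseteq> K"
proof
  fix p assume p: "p \<in> closure (gap K q) - gap K q"
  show "p \<in> K"
  proof (rule ccontr)
    assume "p \<notin> K"
    then have "open (gap K p)" "p \<in> gap K p" using gap_open[OF assms] gap_self by auto
    then have "gap K p \<inter> gap K q \<noteq> {}" using p open_Int_closure_eq_empty[of "gap K p" "gap K q"] by blast
    then obtain w where "w \<in> gap K p" "w \<in> gap K q" by blast
    then have "gap K p = gap K q" using gap_eq by metis
    then show False using p \<open>p \<in> gap K p\<close> by blast
  qed
qed

lemma main_nbhd:
  fixes K :: "'a::linorder_topology set" and B :: "'a \<Rightarrow> nat \<Rightarrow> 'a set"
  assumes cpt: "compact (UNIV :: 'a set)" and Kc: "compact K"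
    and Bo: "\<And>p n. open (B p n)" "\<And>p n. p \<in> B p n" "\<And>p n. B p (Suc n) \<subseteq> B p n"
    and Bb: "\<And>p W. open W \<Longrightarrow> p \<in> W \<Longrightarrow> \<exists>n. B p n \<subseteq> W"
  shows "chiNt_omega K"
proof -
  have Kcl: "closed K" using Kc by (rule compact_imp_closed)
  define P where "P = {gap K q | q. q \<notin> K}"
  define bd where "bd G = closure G - G" for G :: "'a set"
  define R where "R G n = closure G - (\<Union>p\<in>bd G. B p n)" for G n
  define U where "U \<G> n = UNIV - (\<Union>G\<in>\<G>. R G n)" for \<G> n
  define F where "F = {U \<G> n | \<G> n. finite \<G> \<and> \<G> \<subseteq> P}"
  have Popen: "G \<in> P \<Longrightarrow> open G" for G using gap_open[OF Kcl] by (auto simp: P_def)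
  have PK: "G \<in> P \<Longrightarrow> G \<inter> K = {}" for G using gap_notin by (fastforce simp: P_def)
  have Pbd: "G \<in> P \<Longrightarrow> finite (bd G) \<and> bd G \<subseteq> K" for G
    using gap_bd_finite gap_bd_K[OF Kcl] by (auto simp: P_def bd_def)
  have Pdisj: "G \<in> P \<Longrightarrow> G' \<in> P \<Longrightarrow> x \<in> G \<Longrightarrow> x \<in> G' \<Longrightarrow> G = G'" for G G' x
  proof -
    assume a: "G \<in> P" "G' \<in> P" "x \<in> G" "x \<in> G'"
    then obtain q1 q2 where "G = gap K q1" "G' = gap K q2" by (auto simp: P_def)
    then show "G = G'" using gap_eq[of x K q1] gap_eq[of x K q2] a(3,4) by simp
  qed
  have Rsub: "R G n \<subseteq> G" for G n
    using Bo(2) by (auto simp: R_def bd_def)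
  have Bmono: "n \<le> m \<Longrightarrow> B p m \<subseteq> B p n" for p n m
    by (rule lift_Suc_antimono_le[of "B p"]) (use Bo(3) in auto)
  have Rmono: "n \<le> m \<Longrightarrow> R G n \<subseteq> R G m" for G n m
    using Bmono by (auto simp: R_def) blast
  have Rclosed: "closed (R G n)" for G n
    unfolding R_def using Bo(1) by (intro closed_Diff open_UN) auto
  have Uopen: "finite \<G> \<Longrightarrow> open (U \<G> n)" for \<G> n
    unfolding U_def using Rclosed by (intro open_Diff closed_UN) auto
  have KU: "\<G> \<subseteq> P \<Longrightarrow> K \<subseteq> U \<G> n" for \<G> n
  proof
    fix z assume G: "\<G> \<subseteq> P" and z: "z \<in> K"
    show "z \<in> U \<G> n"
    proof (rule ccontr)
      assume "z \<notin> U \<G> n"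
      then obtain G where "G \<in> \<G>" "z \<in> R G n" by (auto simp: U_def)
      then have "z \<in> closure G" "z \<notin> G" "z \<notin> B z n" using PK[of G] G z by (auto simp: R_def bd_def)
      then show False using Bo(2) by blast
    qed
  qed
  have base: "nbhd_base K F"
    unfolding nbhd_base_def
  proof (intro conjI)
    show "\<forall>V\<in>F. open V \<and> K \<subseteq> V"
    proof
    fix V assume "V \<in> F"
    then obtain \<G> n where "V = U \<G> n" "finite \<G>" "\<G> \<subseteq> P" by (auto simp: F_def)
    then show "open V \<and> K \<subseteq> V" using Uopen KU by blast
    qed
  next
    show "\<forall>W. open W \<and> K \<subseteq> W \<longrightarrow> (\<exists>V\<in>F. V \<subseteq> W)"
    proof (intro allI impI)
    fix W assume W: "open W \<and> K \<subseteq> W"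
    have "compact (UNIV \<inter> - W)" using cpt W by (intro compact_Int_closed) auto
    moreover have "UNIV \<inter> - W \<subseteq> \<Union>P"
    proof
      fix x assume "x \<in> UNIV \<inter> - W"
      then have "x \<notin> K" using W by blast
      then show "x \<in> \<Union>P" using gap_self[of x K] unfolding P_def by blast
    qed
    ultimately obtain \<G> where G: "\<G> \<subseteq> P" "finite \<G>" "UNIV \<inter> - W \<subseteq> \<Union>\<G>"
      using Popen by (metis compactE)
    define Ps where "Ps = (\<Union>G\<in>\<G>. bd G)"
    have Psf: "finite Ps" using G Pbd unfolding Ps_def by auto
    have PsW: "Ps \<subseteq> W" using G Pbd W unfolding Ps_def by blast
    have "\<forall>p\<in>Ps. \<exists>n. B p n \<subseteq> W" using PsW W Bb by blast
    then obtain N where N: "\<And>p. p \<in> Ps \<Longrightarrow> B p (N p) \<subseteq> W" by metis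
    define n where "n = Max (insert 0 (N ` Ps))"
    have Nn: "p \<in> Ps \<Longrightarrow> N p \<le> n" for p unfolding n_def using Psf by auto
    have "U \<G> n \<subseteq> W"
    proof
      fix x assume x: "x \<in> U \<G> n"
      show "x \<in> W"
      proof (rule ccontr)
        assume "x \<notin> W"
        then obtain G where G1: "G \<in> \<G>" "x \<in> G" using G(3) by blast
        have "x \<notin> B p n" if "p \<in> bd G" for p
        proof -
          have "p \<in> Ps" using that G1 by (auto simp: Ps_def)
          then show ?thesis using N Nn Bmono \<open>x \<notin> W\<close> by blast
        qed
        then have "x \<in> R G n" using G1 closure_subset by (auto simp: R_def)
        then show False using x G1 by (auto simp: U_def)
      qed
    qed
    then show "\<exists>V\<in>F. V \<subseteq> W" using G by (auto simp: F_def)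
    qed
  qed
  have fin: "finite {V \<in> F. V0 \<subseteq> V}" if "V0 \<in> F" for V0
  proof -
    obtain \<G> n where G: "V0 = U \<G> n" "finite \<G>" "\<G> \<subseteq> P" using \<open>V0 \<in> F\<close> by (auto simp: F_def)
    have "{V \<in> F. V0 \<subseteq> V} \<subseteq> (\<lambda>(H, j). U H j) ` (Pow \<G> \<times> {..n})"
    proof
      fix V assume "V \<in> {V \<in> F. V0 \<subseteq> V}"
      then obtain \<G>' m where V: "V = U \<G>' m" "finite \<G>'" "\<G>' \<subseteq> P" "U \<G> n \<subseteq> U \<G>' m"
        using G by (auto simp: F_def)
      have cov: "(\<Union>G\<in>\<G>'. R G m) \<subseteq> (\<Union>G\<in>\<G>. R G n)" using V(4) by (auto simp: U_def)
      have key: "G \<in> \<G>' \<Longrightarrow> x \<in> R G m \<Longrightarrow> G \<in> \<G> \<and> x \<in> R G n" for G x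
      proof -
        assume a: "G \<in> \<G>'" "x \<in> R G m"
        then obtain G'' where G'': "G'' \<in> \<G>" "x \<in> R G'' n" using cov by blast
        have "G'' = G" using Pdisj[of G'' G x] G'' a Rsub G(3) V(3) by blast
        then show ?thesis using G'' by blast
      qed
      have V1: "V = U (\<G>' \<inter> \<G>) m" using key V(1) unfolding U_def by blast
      show "V \<in> (\<lambda>(H, j). U H j) ` (Pow \<G> \<times> {..n})"
      proof (cases "m \<le> n")
        case True then show ?thesis using V1 by force
      next
        case False
        have "R G m = R G n" if "G \<in> \<G>' \<inter> \<G>" for G
          using key that Rmono[of n m G] False by auto
        then have "V = U (\<G>' \<inter> \<G>) n" using V1 unfolding U_def by auto
        then show ?thesis by force
      qed
    qed
    moreover have "finite ((\<lambda>(H, j). U H j) ` (Pow \<G> \<times> {..n}))" using G(2) by auto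
    ultimately show ?thesis using finite_subset by blast
  qed
  have "op_like natLeq F"
    unfolding op_like_def
  proof
    fix V0 assume "V0 \<in> F"
    then have "(card_of {V \<in> F. V0 \<subseteq> V}, natLeq) \<in> ordLess" using fin finite_iff_ordLess_natLeq by blast
    then show "(natLeq, card_of {V \<in> F. V0 \<subseteq> V}) \<notin> ordLeq" using not_ordLess_ordLeq by blast
  qed
  then show ?thesis using base unfolding chiNt_omega_def by blast
qed

theorem theorem2p32:
  assumes "compact (UNIV :: 'a::linorder_topology set)"
    and "homogeneous_space TYPE('a)"
  shows "chiK_Nt_omega TYPE('a)"
proof -
  obtain B :: "'a \<Rightarrow> nat \<Rightarrow> 'a set" where
    B: "\<forall>p n. open (B p n) \<and> p \<in> B p n \<and> B p (Suc n) \<subseteq> B p n"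
       "\<forall>p W. open W \<and> p \<in> W \<longrightarrow> (\<exists>n. B p n \<subseteq> W)"
    using fc[OF assms] by blast
  show ?thesis unfolding chiK_Nt_omega_def
  proof (intro allI impI)
    fix K :: "'a set" assume "compact K"
    show "chiNt_omega K"
      by (rule main_nbhd[OF assms(1) \<open>compact K\<close>, of B]) (use B in auto)
  qed
qed

end
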